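(* Let $(L,\le,(\sqsubseteq_\alpha)_{\alpha<\kappa})$ be a model of Axioms 1–4. Let $\alpha\le\kappa$, let $(x_\beta)_{\beta<\alpha}$ be a partial compatible sequence, and let $x=\bigvee_{\beta<\alpha}x_\beta$. If $z\in L$ satisfies $x_\beta\sqsubseteq_\beta z$ for all $\beta<\alpha$, then $x\sqsubseteq z$.
   Context: Setting (model of Axioms 1–4). Let $(L,\le)$ be a complete lattice with join operation $\bigvee$ and least element $\perp$. Let $\kappa>0$ be an ordinal, and for each ordinal $\alpha<\kappa$ let $\sqsubseteq_\alpha$ be a preorder on $L$. Derived relations: - $x=_\alpha y$ means $x\sqsubseteq_\alpha y$ and $y\sqsubseteq_\alpha x$. - $x\sqsubset_\alpha y$ means $x\sqsubseteq_\alpha y$ and not $x=_\alpha y$. - $\sqsubset=\bigcup_{\alpha<\kappa}\sqsubset_\alpha$. - $x\sqsubseteq y$ means $x\sqsubset y$ or $x=y$. Derived sets, for $x\in L$ and $\alpha<\kappa$: - $(x]_\alpha=\{y\in L:\forall\beta<\alpha,\ x=_\beta y\}$. - $[x]_\alpha=\{y\in L: x=_\alpha y\}$. For a set $X$, $X\sqsubseteq_\alpha y$ means $x\sqsubseteq_\alpha y$ for all $x\in X$. The structure is a model of Axioms 1–4 if: - (A1) for all $\alpha<\beta<\kappa$, $x\sqsubseteq_\beta y$ implies $x=_\alpha y$; - (A2) $\bigcap_{\alpha<\kappa}=_\alpha$ is the identity relation on $L$; - (A3) for every $x\in L$, every $\alpha<\kappa$ and every $X\subseteq(x]_\alpha$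 there is $y\in(x]_\alpha$ with $X\sqsubseteq_\alpha y$ such that for all $z\in(x]_\alpha$ with $X\sqsubseteq_\alpha z$ we have $y\sqsubseteq_\alpha z$ and $y\le z$; - (A4) for every nonempty $X\subseteq L$, every $\alpha<\kappa$ and every $y\in L$, if $y=_\alpha x$ for all $x\in X$ then $y=_\alpha\bigvee X$. For an ordinal $\alpha\le\kappa$, a sequence $(x_\beta)_{\beta<\alpha}$ is a partial compatible sequence if each $x_\beta$ is the $\le$-least element of $[x_\beta]_\beta$ and $x_\beta=_\beta x_\gamma$ for all $\beta<\gamma<\alpha$. *)

theory Defs
  imports Main
begin

text \<open>Ordinals below kappa are represented by the elements of a nonempty
well-ordered type 'k (every well-order is isomorphic to an ordinal; kappa > 0
corresponds to the type being nonempty). An ordinal alpha \<le> kappa is represented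
by the initial segment {beta. beta < alpha} of 'k, i.e. by a downward closed
subset of 'k (possibly all of 'k, which represents alpha = kappa).
R alpha is the preorder \<sqsubseteq>_alpha.\<close>

definition eqa :: "('k \<Rightarrow> 'a \<Rightarrow> 'a \<Rightarrow> bool) \<Rightarrow> 'k \<Rightarrow> 'a \<Rightarrow> 'a \<Rightarrow> bool" where
  "eqa R \<alpha> x y \<longleftrightarrow> R \<alpha> x y \<and> R \<alpha> y x"

definition lta :: "('k \<Rightarrow> 'a \<Rightarrow> 'a \<Rightarrow> bool) \<Rightarrow> 'k \<Rightarrow> 'a \<Rightarrow> 'a \<Rightarrow> bool" where
  "lta R \<alpha> x y \<longleftrightarrow> R \<alpha> x y \<and> \<not> eqa R \<alpha> x y"

definition lt_all :: "('k \<Rightarrow> 'a \<Rightarrow> 'a \<Rightarrow> bool) \<Rightarrow> 'a \<Rightarrow> 'a \<Rightarrow> bool" where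
  "lt_all R x y \<longleftrightarrow> (\<exists>\<alpha>. lta R \<alpha> x y)"

definition le_all :: "('k \<Rightarrow> 'a \<Rightarrow> 'a \<Rightarrow> bool) \<Rightarrow> 'a \<Rightarrow> 'a \<Rightarrow> bool" where
  "le_all R x y \<longleftrightarrow> lt_all R x y \<or> x = y"

definition downcls :: "('k::wellorder \<Rightarrow> 'a \<Rightarrow> 'a \<Rightarrow> bool) \<Rightarrow> 'a \<Rightarrow> 'k \<Rightarrow> 'a set" where
  "downcls R x \<alpha> = {y. \<forall>\<beta><\<alpha>. eqa R \<beta> x y}"

definition eqcls :: "('k \<Rightarrow> 'a \<Rightarrow> 'a \<Rightarrow> bool) \<Rightarrow> 'a \<Rightarrow> 'k \<Rightarrow> 'a set" where
  "eqcls R x \<alpha> = {y. eqa R \<alpha> x y}"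

definition model_A1_4 :: "('k::wellorder \<Rightarrow> 'a::complete_lattice \<Rightarrow> 'a \<Rightarrow> bool) \<Rightarrow> bool" where
  "model_A1_4 R \<longleftrightarrow>
     (\<forall>\<alpha>. (\<forall>x. R \<alpha> x x) \<and> (\<forall>x y z. R \<alpha> x y \<longrightarrow> R \<alpha> y z \<longrightarrow> R \<alpha> x z)) \<and>
     (\<forall>\<alpha> \<beta> x y. \<alpha> < \<beta> \<longrightarrow> R \<beta> x y \<longrightarrow> eqa R \<alpha> x y) \<and>
     (\<forall>x y. (\<forall>\<alpha>. eqa R \<alpha> x y) \<longrightarrow> x = y) \<and>
     (\<forall>x \<alpha> X. X \<subseteq> downcls R x \<alpha> \<longrightarrow>
        (\<exists>y\<in>downcls R x \<alpha>. (\<forall>u\<in>X. R \<alpha> u y) \<and>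
            (\<forall>z\<in>downcls R x \<alpha>. (\<forall>u\<in>X. R \<alpha> u z) \<longrightarrow> R \<alpha> y z \<and> y \<le> z))) \<and>
     (\<forall>X \<alpha> y. X \<noteq> {} \<longrightarrow> (\<forall>x\<in>X. eqa R \<alpha> y x) \<longrightarrow> eqa R \<alpha> y (Sup X))"

definition init_seg :: "'k::wellorder set \<Rightarrow> bool" where
  "init_seg I \<longleftrightarrow> (\<forall>\<beta>\<in>I. \<forall>\<gamma>. \<gamma> < \<beta> \<longrightarrow> \<gamma> \<in> I)"

definition partial_compatible :: "('k::wellorder \<Rightarrow> 'a::complete_lattice \<Rightarrow> 'a \<Rightarrow> bool) \<Rightarrow> 'k set \<Rightarrow> ('k \<Rightarrow> 'a) \<Rightarrow> bool" where
  "partial_compatible R I xs \<longleftrightarrow>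
     (\<forall>\<beta>\<in>I. xs \<beta> \<in> eqcls R (xs \<beta>) \<beta> \<and> (\<forall>y\<in>eqcls R (xs \<beta>) \<beta>. xs \<beta> \<le> y)) \<and>
     (\<forall>\<beta>\<in>I. \<forall>\<gamma>\<in>I. \<beta> < \<gamma> \<longrightarrow> eqa R \<beta> (xs \<beta>) (xs \<gamma>))"

end

theory Submission
  imports Defs
begin

theorem mainTheorem12:
  fixes R :: "'k::wellorder \<Rightarrow> 'a::complete_lattice \<Rightarrow> 'a \<Rightarrow> bool"
    and I :: "'k set" and xs :: "'k \<Rightarrow> 'a" and z :: 'a
  assumes "model_A1_4 R"
    and "init_seg I"
    and "partial_compatible R I xs"
    and "\<forall>\<beta>\<in>I. R \<beta> (xs \<beta>) z"
  shows "le_all R (Sup (xs ` I)) z"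
proof -
  have refl: "\<And>a x. R a x x" and trans: "\<And>a x y w. R a x y \<Longrightarrow> R a y w \<Longrightarrow> R a x w"
    and A1: "\<And>a b x y. a < b \<Longrightarrow> R b x y \<Longrightarrow> eqa R a x y"
    and A2: "\<And>x y. (\<forall>a. eqa R a x y) \<Longrightarrow> x = y"
    and A3: "\<And>x a X. X \<subseteq> downcls R x a \<Longrightarrow>
        (\<exists>y\<in>downcls R x a. (\<forall>u\<in>X. R a u y) \<and>
            (\<forall>z\<in>downcls R x a. (\<forall>u\<in>X. R a u z) \<longrightarrow> R a y z \<and> y \<le> z))"
    and A4: "\<And>X a y. X \<noteq> {} \<Longrightarrow> (\<forall>x\<in>X. eqa R a y x) \<Longrightarrow> eqa R a y (Sup X)"
  proof -
    note M = assms(1)[unfolded model_A1_4_def]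
    note P = M[THEN conjunct1] M[THEN conjunct2, THEN conjunct1]
      M[THEN conjunct2, THEN conjunct2, THEN conjunct1]
      M[THEN conjunct2, THEN conjunct2, THEN conjunct2, THEN conjunct1]
      M[THEN conjunct2, THEN conjunct2, THEN conjunct2, THEN conjunct2]
    show "\<And>a x. R a x x" using P(1) by blast
    show "\<And>a x y w. R a x y \<Longrightarrow> R a y w \<Longrightarrow> R a x w" using P(1) by blast
    show "\<And>a b x y. a < b \<Longrightarrow> R b x y \<Longrightarrow> eqa R a x y" using P(2) by blast
    show "\<And>x y. (\<forall>a. eqa R a x y) \<Longrightarrow> x = y" using P(3) by blast
    show "\<And>x a X. X \<subseteq> downcls R x a \<Longrightarrow>
        (\<exists>y\<in>downcls R x a. (\<forall>u\<in>X. R a u y) \<and>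
            (\<forall>z\<in>downcls R x a. (\<forall>u\<in>X. R a u z) \<longrightarrow> R a y z \<and> y \<le> z))"
      using P(4) by (rule allE) (erule allE, erule allE, erule mp)
    show "\<And>X a y. X \<noteq> {} \<Longrightarrow> (\<forall>x\<in>X. eqa R a y x) \<Longrightarrow> eqa R a y (Sup X)"
      using P(5) by blast
  qed
  have eqsym: "\<And>a x y. eqa R a x y \<Longrightarrow> eqa R a y x" by (simp add: eqa_def)
  have eqtrans: "\<And>a x y w. eqa R a x y \<Longrightarrow> eqa R a y w \<Longrightarrow> eqa R a x w"
    unfolding eqa_def using trans by blast
  have least: "\<And>b y. b \<in> I \<Longrightarrow> eqa R b (xs b) y \<Longrightarrow> xs b \<le> y"
    using assms(3) unfolding partial_compatible_def eqcls_def by blast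
  have comp: "\<And>b c. b \<in> I \<Longrightarrow> c \<in> I \<Longrightarrow> b < c \<Longrightarrow> eqa R b (xs b) (xs c)"
    using assms(3) unfolding partial_compatible_def by blast
  define x where "x = Sup (xs ` I)"
  have xeq: "eqa R b (xs b) x" if b: "b \<in> I" for b
  proof -
    define S where "S = xs ` {c\<in>I. b \<le> c}"
    have "S \<noteq> {}" using b S_def by blast
    have "Sup S = x"
    proof (rule antisym)
      show "Sup S \<le> x" unfolding S_def x_def by (rule Sup_subset_mono) blast
      show "x \<le> Sup S" unfolding x_def
      proof (rule Sup_least)
        fix u assume "u \<in> xs ` I"
        then obtain c where c: "c \<in> I" "u = xs c" by blast
        show "u \<le> Sup S"
        proof (cases "b \<le> c")
          case True then show ?thesis using c S_def by (auto intro: Sup_upper)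
        next
          case False
          then have "c < b" by simp
          then have "xs c \<le> xs b" using least[OF c(1) comp[OF c(1) b]] by simp
          also have "xs b \<le> Sup S" using b S_def by (auto intro: Sup_upper)
          finally show ?thesis using c by simp
        qed
      qed
    qed
    moreover have "\<forall>s\<in>S. eqa R b (xs b) s"
    proof
      fix s assume "s \<in> S"
      then obtain c where c: "c \<in> I" "b \<le> c" "s = xs c" using S_def by blast
      show "eqa R b (xs b) s"
      proof (cases "b = c")
        case True then show ?thesis using c refl by (simp add: eqa_def)
      next
        case False then show ?thesis using c comp[OF b c(1)] by simp
      qed
    qed
    ultimately show ?thesis using A4[OF \<open>S \<noteq> {}\<close>] by simp
  qed
  show ?thesis
  proof (cases "\<forall>a. eqa R a x z")
    case True then show ?thesis using A2 unfolding le_all_def x_def by blast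
  next
    case False
    then have ex: "\<exists>a. \<not> eqa R a x z" by blast
    define a where "a = (LEAST a. \<not> eqa R a x z)"
    have na: "\<not> eqa R a x z" unfolding a_def by (rule LeastI_ex[OF ex])
    have below: "\<And>b. b < a \<Longrightarrow> eqa R b x z" unfolding a_def using not_less_Least by blast
    have Raxz: "R a x z"
    proof (cases "a \<in> I")
      case True
      then show ?thesis using xeq[OF True] assms(4) trans unfolding eqa_def by blast
    next
      case False
      have Isub: "\<And>b. b \<in> I \<Longrightarrow> b < a"
      proof -
        fix b assume "b \<in> I"
        show "b < a"
        proof (rule ccontr)
          assume "\<not> b < a" then have "a \<le> b" by simp
          then have "a = b \<or> a < b" by auto
          then show False using False \<open>b \<in> I\<close> assms(2) unfolding init_seg_def by blast
        qed
      qed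
      have xmin: "x \<le> w" if w: "w \<in> downcls R x a" for w
        unfolding x_def
      proof (rule Sup_least)
        fix u assume "u \<in> xs ` I"
        then obtain c where c: "c \<in> I" "u = xs c" by blast
        have "eqa R c x w" using w Isub[OF c(1)] unfolding downcls_def by blast
        then have "eqa R c (xs c) w" using eqtrans xeq[OF c(1)] by blast
        then show "u \<le> w" using least c by blast
      qed
      have xin: "x \<in> downcls R x a" unfolding downcls_def eqa_def using refl by blast
      have zin: "z \<in> downcls R x a" unfolding downcls_def using below by blast
      obtain y where y: "y \<in> downcls R x a"
        "\<forall>w\<in>downcls R x a. R a y w \<and> y \<le> w"
        using A3[of "{}" x a] by auto
      have "y = x" using y xin xmin by (meson antisym)
      then show ?thesis using y zin by blast
    qed
    then have "lta R a x z" using na unfolding lta_def by blast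
    then show ?thesis unfolding le_all_def lt_all_def x_def by blast
  qed
qed

end
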